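(* Assume $(\boldsymbol\lambda,\boldsymbol\mu)$ satisfies (H) (notation as there). 1) If $(\boldsymbol\lambda,\boldsymbol\mu)$ satisfies (J1), then $\delta>0$, and $j^\prec_{\boldsymbol\lambda,\boldsymbol\mu}=(-1)^{\mathrm{ht}\rho+\mathrm{ht}\rho'}$ if $h\equiv\gamma\pmod{nl}$ or $h\equiv\delta\pmod{nl}$, and $j^\prec_{\boldsymbol\lambda,\boldsymbol\mu}=0$ otherwise. 2) If $(\boldsymbol\lambda,\boldsymbol\mu)$ satisfies (J2), then $\delta=0$ and $j^\prec_{\boldsymbol\lambda,\boldsymbol\mu}=(-1)^{\mathrm{ht}\rho+\mathrm{ht}\rho'}\varepsilon$, where $\varepsilon=1$ if $h\equiv\gamma\pmod{nl}$ and $h\not\equiv0\pmod{nl}$; $\varepsilon=-1$ if $h\not\equiv\gamma\pmod{nl}$ and $h\equiv0\pmod{nl}$; $\varepsilon=0$ otherwise.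
   Context: Fix $n,l,m\ge1$, $\mathbf s_l=(s_1,\dots,s_l)\in\mathbb Z^l$, $s=\sum s_b$. Partitions are identified with Young diagrams; $\Pi^l_m$ = $l$-tuples of partitions of total size $m$, nodes $(i,j,b)$ with content $s_b+j-i$ and $\mathrm{res}_n$ = content mod $n$. Ribbon: nonempty connected skew diagram with no $2\times2$ square; head/tail = node with $j-i$ minimal/maximal; $\mathrm{ht}$ = row of head minus row of tail; length = number of nodes. For $|\lambda|=r$, $\boldsymbol\beta(\lambda)=(\lambda_i+s+1-i)_{i\le r}$, $B(\lambda)$ its set. Each $k\in\mathbb Z$ is uniquely $k=c(k)+n(d(k)-1)+nl\,m(k)$, $c(k)\in\{1..n\}$, $d(k)\in\{1..l\}$; $\phi(k)=c(k)+n\,m(k)$. $\boldsymbol\lambda\leftrightarrow\lambda$ iff $\{(\lambda^{(b)}_i+s_b+1-i,b)\}=\{(\phi(k),d(k)):k\in\{\lambda_i+s+1-i\}\}$. $\boldsymbol\lambda\prec\boldsymbol\mu$ iff $\lambda\lhd\mu$ (strict dominance). (J1): $\boldsymbol\lambda\ne\boldsymbol\mu$, there are $d\ne d'$ with $\mu^{(d)}\subset\lambda^{(d)}$, $\lambda^{(d')}\subset\mu^{(d')}$, $\lambda^{(b)}=\mu^{(b)}$ otherwise, and $\rho:=\lambda^{(d)}/\mu^{(d)}$, $\rho':=\mu^{(d')}/\lambda^{(d')}$ ribbons of common length $\hat h$. (J2): $\boldsymbol\lambda\ne\boldsymbol\mu$, there is $d$ with $\lambda^{(b)}=\mu^{(b)}$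 for $b\ne d$, $\rho:=\lambda^{(d)}/(\lambda^{(d)}\cap\mu^{(d)})$, $\rho':=\mu^{(d)}/(\lambda^{(d)}\cap\mu^{(d)})$ ribbons of common length $\hat h$. $j_{\boldsymbol\lambda,\boldsymbol\mu}$: in case (J1), $(-1)^{\mathrm{ht}\rho+\mathrm{ht}\rho'}$ if $\mathrm{res}_n(\mathrm{hd}\rho)=\mathrm{res}_n(\mathrm{hd}\rho')$, else $0$; in case (J2), $(-1)^{\mathrm{ht}\rho+\mathrm{ht}\rho'}\varepsilon'$ with $\varepsilon'=1$ if head residues are equal and $\hat h\not\equiv0\pmod n$, $\varepsilon'=-1$ if they differ and $\hat h\equiv 0\pmod n$, $\varepsilon'=0$ otherwise; otherwise $0$ (this equals the paper's $\wp$-adic valuation $\nu_\wp(J_{\boldsymbol\lambda,\boldsymbol\mu})$). $j^\prec_{\boldsymbol\lambda,\boldsymbol\mu}=j_{\boldsymbol\lambda,\boldsymbol\mu}$ if $\boldsymbol\lambda\prec\boldsymbol\mu$, else $0$. (H): $\boldsymbol\lambda\leftrightarrow\lambda$, $\boldsymbol\mu\leftrightarrow\mu$, $\boldsymbol\lambda\prec\boldsymbol\mu$, $|\lambda|=|\mu|=r$, $\#(B(\lambda)\cap B(\mu))=r-2$. Under (H): $\boldsymbol\beta(\lambda)=(\alpha_i)$, $\boldsymbol\beta(\mu)=(\beta_i)$; $\lambda/(\lambda\cap\mu)$ and $\mu/(\lambda\cap\mu)$ are ribbons of a common length $h$; $x$ is the row of the head of $\lambda/(\lambda\cap\mu)$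 and $y$ the row of the tail of $\mu/(\lambda\cap\mu)$; $\gamma,\delta\in\{0,\dots,nl-1\}$ are the residues mod $nl$ of $c(\beta_y)-c(\beta_x)$ and $n(d(\beta_y)-d(\beta_x))$. *)

theory Defs
  imports Main
begin

text \<open>A partition is a function p :: nat => nat with rows indexed from 1
  (p 0 = 0 by convention), weakly decreasing, finitely supported.\<close>
definition is_partition :: "(nat \<Rightarrow> nat) \<Rightarrow> bool" where
  "is_partition p \<longleftrightarrow> p 0 = 0 \<and> (\<forall>i\<ge>1. p (Suc i) \<le> p i) \<and> finite {i. p i \<noteq> 0}"

definition young :: "(nat \<Rightarrow> nat) \<Rightarrow> (nat \<times> nat) set" where
  "young p = {(i, j). 1 \<le> i \<and> 1 \<le> j \<and> j \<le> p i}"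

definition psize :: "(nat \<Rightarrow> nat) \<Rightarrow> nat" where
  "psize p = card (young p)"

definition multipartition :: "nat \<Rightarrow> nat \<Rightarrow> (nat \<Rightarrow> nat \<Rightarrow> nat) \<Rightarrow> bool" where
  "multipartition l m L \<longleftrightarrow> (\<forall>b\<in>{1..l}. is_partition (L b)) \<and>
     (\<forall>b. b \<notin> {1..l} \<longrightarrow> L b = (\<lambda>_. 0)) \<and> (\<Sum>b=1..l. psize (L b)) = m"

definition dominates_strict :: "(nat \<Rightarrow> nat) \<Rightarrow> (nat \<Rightarrow> nat) \<Rightarrow> bool" where
  "dominates_strict p q \<longleftrightarrow> psize p = psize q \<and>
     (\<forall>k. (\<Sum>i=1..k. p i) \<le> (\<Sum>i=1..k. q i)) \<and> p \<noteq> q"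

definition adjacent :: "nat \<times> nat \<Rightarrow> nat \<times> nat \<Rightarrow> bool" where
  "adjacent u v \<longleftrightarrow>
     \<bar>int (fst u) - int (fst v)\<bar> + \<bar>int (snd u) - int (snd v)\<bar> = 1"

definition node_connected :: "(nat \<times> nat) set \<Rightarrow> bool" where
  "node_connected S \<longleftrightarrow>
     (\<forall>u\<in>S. \<forall>v\<in>S. (\<lambda>a b. a \<in> S \<and> b \<in> S \<and> adjacent a b)\<^sup>*\<^sup>* u v)"

definition no_square :: "(nat \<times> nat) set \<Rightarrow> bool" where
  "no_square S \<longleftrightarrow> \<not> (\<exists>i j. (i, j) \<in> S \<and> (Suc i, j) \<in> S \<and> (i, Suc j) \<in> S \<and> (Suc i, Suc j) \<in> S)"

text \<open>A ribbon: nonempty (finite) connected skew diagram with no 2x2 square.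
  (It is only ever applied to skew diagrams of the form young p - young q.)\<close>
definition ribbon :: "(nat \<times> nat) set \<Rightarrow> bool" where
  "ribbon S \<longleftrightarrow> S \<noteq> {} \<and> finite S \<and> node_connected S \<and> no_square S"

definition cont0 :: "nat \<times> nat \<Rightarrow> int" where
  "cont0 u = int (snd u) - int (fst u)"

definition rhead :: "(nat \<times> nat) set \<Rightarrow> nat \<times> nat" where
  "rhead S = (SOME u. u \<in> S \<and> (\<forall>v\<in>S. cont0 u \<le> cont0 v))"

definition rtail :: "(nat \<times> nat) set \<Rightarrow> nat \<times> nat" where
  "rtail S = (SOME u. u \<in> S \<and> (\<forall>v\<in>S. cont0 v \<le> cont0 u))"

definition rht :: "(nat \<times> nat) set \<Rightarrow> nat" where
  "rht S = fst (rhead S) - fst (rtail S)"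

definition resn :: "nat \<Rightarrow> (nat \<Rightarrow> int) \<Rightarrow> nat \<Rightarrow> nat \<times> nat \<Rightarrow> int" where
  "resn n s b u = (s b + int (snd u) - int (fst u)) mod int n"

definition charge :: "nat \<Rightarrow> (nat \<Rightarrow> int) \<Rightarrow> int" where
  "charge l s = (\<Sum>b=1..l. s b)"

definition beta :: "int \<Rightarrow> (nat \<Rightarrow> nat) \<Rightarrow> nat \<Rightarrow> int" where
  "beta c p i = int (p i) + c + 1 - int i"

definition Bset :: "int \<Rightarrow> nat \<Rightarrow> (nat \<Rightarrow> nat) \<Rightarrow> int set" where
  "Bset c r p = {beta c p i | i. 1 \<le> i \<and> i \<le> r}"

text \<open>The unique decomposition k = c(k) + n(d(k)-1) + n l m(k), with
  c(k) in {1..n}, d(k) in {1..l}, written out explicitly.\<close>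
definition cc :: "nat \<Rightarrow> nat \<Rightarrow> int \<Rightarrow> int" where
  "cc n l k = ((k - 1) mod int (n * l)) mod int n + 1"

definition dd :: "nat \<Rightarrow> nat \<Rightarrow> int \<Rightarrow> nat" where
  "dd n l k = nat (((k - 1) mod int (n * l)) div int n) + 1"

definition mm :: "nat \<Rightarrow> nat \<Rightarrow> int \<Rightarrow> int" where
  "mm n l k = (k - 1) div int (n * l)"

definition phi :: "nat \<Rightarrow> nat \<Rightarrow> int \<Rightarrow> int" where
  "phi n l k = cc n l k + int n * mm n l k"

text \<open>bold-lambda <-> lambda (all rows i >= 1, i.e. infinite charged beta-sets).\<close>
definition corresp :: "nat \<Rightarrow> nat \<Rightarrow> (nat \<Rightarrow> int) \<Rightarrow> (nat \<Rightarrow> nat \<Rightarrow> nat) \<Rightarrow> (nat \<Rightarrow> nat) \<Rightarrow> bool" where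
  "corresp n l s L p \<longleftrightarrow>
     {(beta (s b) (L b) i, b) | b i. b \<in> {1..l} \<and> 1 \<le> i} =
     (\<lambda>k. (phi n l k, dd n l k)) ` {beta (charge l s) p i | i. 1 \<le> i}"

definition prec :: "nat \<Rightarrow> nat \<Rightarrow> (nat \<Rightarrow> int) \<Rightarrow> (nat \<Rightarrow> nat \<Rightarrow> nat) \<Rightarrow> (nat \<Rightarrow> nat \<Rightarrow> nat) \<Rightarrow> bool" where
  "prec n l s L M \<longleftrightarrow> (\<exists>p q. is_partition p \<and> is_partition q \<and> corresp n l s L p \<and> corresp n l s M q \<and> dominates_strict p q)"

definition J1 :: "nat \<Rightarrow> (nat \<Rightarrow> nat \<Rightarrow> nat) \<Rightarrow> (nat \<Rightarrow> nat \<Rightarrow> nat) \<Rightarrow> nat \<Rightarrow> nat \<Rightarrow> bool" where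
  "J1 l L M d d' \<longleftrightarrow> L \<noteq> M \<and> d \<in> {1..l} \<and> d' \<in> {1..l} \<and> d \<noteq> d' \<and>
     young (M d) \<subseteq> young (L d) \<and> young (L d') \<subseteq> young (M d') \<and>
     (\<forall>b\<in>{1..l}. b \<noteq> d \<and> b \<noteq> d' \<longrightarrow> L b = M b) \<and>
     ribbon (young (L d) - young (M d)) \<and> ribbon (young (M d') - young (L d')) \<and>
     card (young (L d) - young (M d)) = card (young (M d') - young (L d'))"

definition J2 :: "nat \<Rightarrow> (nat \<Rightarrow> nat \<Rightarrow> nat) \<Rightarrow> (nat \<Rightarrow> nat \<Rightarrow> nat) \<Rightarrow> nat \<Rightarrow> bool" where
  "J2 l L M d \<longleftrightarrow> L \<noteq> M \<and> d \<in> {1..l} \<and>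
     (\<forall>b\<in>{1..l}. b \<noteq> d \<longrightarrow> L b = M b) \<and>
     ribbon (young (L d) - young (M d)) \<and> ribbon (young (M d) - young (L d)) \<and>
     card (young (L d) - young (M d)) = card (young (M d) - young (L d))"

definition j1val :: "nat \<Rightarrow> (nat \<Rightarrow> int) \<Rightarrow> (nat \<Rightarrow> nat \<Rightarrow> nat) \<Rightarrow> (nat \<Rightarrow> nat \<Rightarrow> nat) \<Rightarrow> nat \<Rightarrow> nat \<Rightarrow> int" where
  "j1val n s L M d d' =
    (let \<rho> = young (L d) - young (M d); \<rho>' = young (M d') - young (L d') in
     if resn n s d (rhead \<rho>) = resn n s d' (rhead \<rho>') then (-1) ^ (rht \<rho> + rht \<rho>') else 0)"

definition j2val :: "nat \<Rightarrow> (nat \<Rightarrow> int) \<Rightarrow> (nat \<Rightarrow> nat \<Rightarrow> nat) \<Rightarrow> (nat \<Rightarrow> nat \<Rightarrow> nat) \<Rightarrow> nat \<Rightarrow> int" where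
  "j2val n s L M d =
    (let \<rho> = young (L d) - young (M d); \<rho>' = young (M d) - young (L d);
         hh = card \<rho>;
         same = (resn n s d (rhead \<rho>) = resn n s d (rhead \<rho>'));
         eps = (if same \<and> \<not> n dvd hh then 1 else if \<not> same \<and> n dvd hh then -1 else (0::int)) in
     (-1) ^ (rht \<rho> + rht \<rho>') * eps)"

text \<open>j_{lambda,mu}; in case (J1)/(J2) the witnesses d, d' are unique, so the
  choice operator merely picks them.\<close>
definition jcoef :: "nat \<Rightarrow> nat \<Rightarrow> (nat \<Rightarrow> int) \<Rightarrow> (nat \<Rightarrow> nat \<Rightarrow> nat) \<Rightarrow> (nat \<Rightarrow> nat \<Rightarrow> nat) \<Rightarrow> int" where
  "jcoef n l s L M =
    (if \<exists>d d'. J1 l L M d d' then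
       (let dp = (SOME dp. J1 l L M (fst dp) (snd dp)) in j1val n s L M (fst dp) (snd dp))
     else if \<exists>d. J2 l L M d then j2val n s L M (SOME d. J2 l L M d)
     else 0)"

definition jprec :: "nat \<Rightarrow> nat \<Rightarrow> (nat \<Rightarrow> int) \<Rightarrow> (nat \<Rightarrow> nat \<Rightarrow> nat) \<Rightarrow> (nat \<Rightarrow> nat \<Rightarrow> nat) \<Rightarrow> int" where
  "jprec n l s L M = (if prec n l s L M then jcoef n l s L M else 0)"

definition condH :: "nat \<Rightarrow> nat \<Rightarrow> (nat \<Rightarrow> int) \<Rightarrow> (nat \<Rightarrow> nat \<Rightarrow> nat) \<Rightarrow> (nat \<Rightarrow> nat \<Rightarrow> nat)
     \<Rightarrow> (nat \<Rightarrow> nat) \<Rightarrow> (nat \<Rightarrow> nat) \<Rightarrow> nat \<Rightarrow> bool" where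
  "condH n l s L M p q r \<longleftrightarrow> is_partition p \<and> is_partition q \<and> corresp n l s L p \<and> corresp n l s M q \<and> prec n l s L M \<and>
     psize p = r \<and> psize q = r \<and>
     int (card (Bset (charge l s) r p \<inter> Bset (charge l s) r q)) = int r - 2"

end

theory Submission
  imports Defs
begin

definition BS :: "int \<Rightarrow> (nat \<Rightarrow> nat) \<Rightarrow> int set" where
  "BS c P = {beta c P i | i. 1 \<le> i}"

definition Nf :: "int set \<Rightarrow> int \<Rightarrow> nat" where
  "Nf X v = card {x\<in>X. v \<le> x}"

lemma part_mono:
  assumes "is_partition P" "1 \<le> i" "i \<le> j" shows "P j \<le> P i"
  using assms(3)
proof (induction j rule: dec_induct)
  case base then show ?case by simp
next
  case (step k)
  have "P (Suc k) \<le> P k" using assms(1) assms(2) step.hyps(1) unfolding is_partition_def by auto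
  then show ?case using step.IH by linarith
qed

lemma part_supp:
  assumes "is_partition P" obtains R where "\<And>i. R < i \<Longrightarrow> P i = 0"
proof -
  have "finite {i. P i \<noteq> 0}" using assms unfolding is_partition_def by auto
  then obtain R where "\<forall>i\<in>{i. P i \<noteq> 0}. i \<le> R" using finite_nat_set_iff_bounded_le by blast
  then have "\<And>i. R < i \<Longrightarrow> P i = 0" by (meson mem_Collect_eq not_le)
  then show ?thesis by (rule that)
qed

lemma beta_strict:
  assumes "is_partition P" "1 \<le> i" "i < j" shows "beta c P j < beta c P i"
  using part_mono[OF assms(1,2), of j] assms(3) unfolding beta_def by auto

lemma beta_inj: assumes "is_partition P" shows "inj_on (beta c P) {i. 1 \<le> i}"
proof (rule inj_onI)
  fix i j assume "i \<in> {i. 1 \<le> i}" "j \<in> {i. 1 \<le> i}" "beta c P i = beta c P j"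
  then show "i = j" using beta_strict[OF assms, of i j c] beta_strict[OF assms, of j i c]
    by (cases "i < j"; cases "j < i") auto
qed

lemma fin_rows: assumes "is_partition P" shows "finite {i. 1 \<le> i \<and> v \<le> beta c P i}"
proof -
  obtain R where R: "\<And>i. R < i \<Longrightarrow> P i = 0" using part_supp[OF assms] by blast
  have "{i. 1 \<le> i \<and> v \<le> beta c P i} \<subseteq> {..max R (nat (c + 1 - v))}"
  proof
    fix i assume "i \<in> {i. 1 \<le> i \<and> v \<le> beta c P i}"
    then have "v \<le> beta c P i" by auto
    show "i \<in> {..max R (nat (c + 1 - v))}"
    proof (cases "R < i")
      case True
      then have "P i = 0" using R by auto
      then show ?thesis using \<open>v \<le> beta c P i\<close> unfolding beta_def by auto
    qed auto
  qed
  then show ?thesis using finite_subset by blast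
qed

lemma Nf_rows: assumes "is_partition P"
  shows "Nf (BS c P) v = card {i. 1 \<le> i \<and> v \<le> beta c P i}"
proof -
  have "{x\<in>BS c P. v \<le> x} = beta c P ` {i. 1 \<le> i \<and> v \<le> beta c P i}"
    unfolding BS_def by auto
  moreover have "inj_on (beta c P) {i. 1 \<le> i \<and> v \<le> beta c P i}"
    using beta_inj[OF assms, of c] by (rule inj_on_subset) auto
  ultimately show ?thesis unfolding Nf_def by (simp add: card_image)
qed

lemma fin_BS: assumes "is_partition P" shows "finite {x\<in>BS c P. v \<le> x}"
proof -
  have "{x\<in>BS c P. v \<le> x} = beta c P ` {i. 1 \<le> i \<and> v \<le> beta c P i}"
    unfolding BS_def by auto
  then show ?thesis using fin_rows[OF assms] by simp
qed

lemma L5: assumes "is_partition P" "1 \<le> i"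
  shows "v \<le> beta c P i \<longleftrightarrow> i \<le> Nf (BS c P) v"
proof
  assume a: "v \<le> beta c P i"
  have "{1..i} \<subseteq> {i. 1 \<le> i \<and> v \<le> beta c P i}"
  proof
    fix k assume "k \<in> {1..i}"
    then have "beta c P i \<le> beta c P k" using beta_strict[OF assms(1), of k i c]
      by (cases "k = i") auto
    then show "k \<in> {i. 1 \<le> i \<and> v \<le> beta c P i}" using a \<open>k \<in> {1..i}\<close> by auto
  qed
  from card_mono[OF fin_rows[OF assms(1)] this] show "i \<le> Nf (BS c P) v"
    using Nf_rows[OF assms(1)] by simp
next
  assume a: "i \<le> Nf (BS c P) v"
  show "v \<le> beta c P i"
  proof (rule ccontr)
    assume "\<not> v \<le> beta c P i"
    have "{i. 1 \<le> i \<and> v \<le> beta c P i} \<subseteq> {1..i - 1}"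
    proof
      fix k assume k: "k \<in> {i. 1 \<le> i \<and> v \<le> beta c P i}"
      have "k < i"
      proof (rule ccontr)
        assume "\<not> k < i"
        then have "beta c P k \<le> beta c P i" using beta_strict[OF assms, of k c]
          by (cases "k = i") auto
        then show False using k \<open>\<not> v \<le> beta c P i\<close> by auto
      qed
      then show "k \<in> {1..i - 1}" using k by auto
    qed
    from card_mono[OF _ this] have "Nf (BS c P) v \<le> i - 1"
      using Nf_rows[OF assms(1)] by simp
    then show False using a assms(2) by linarith
  qed
qed

lemma young_char: assumes "is_partition P"
  shows "young P = {(i,j). 1 \<le> i \<and> 1 \<le> j \<and> i \<le> Nf (BS c P) (int j - int i + c + 1)}"
proof -
  have "\<And>i j. 1 \<le> i \<Longrightarrow> (j \<le> P i \<longleftrightarrow> i \<le> Nf (BS c P) (int j - int i + c + 1))"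
  proof -
    fix i j :: nat assume "1 \<le> i"
    have "j \<le> P i \<longleftrightarrow> int j - int i + c + 1 \<le> beta c P i" unfolding beta_def by auto
    then show "j \<le> P i \<longleftrightarrow> i \<le> Nf (BS c P) (int j - int i + c + 1)"
      using L5[OF assms \<open>1 \<le> i\<close>] by simp
  qed
  then show ?thesis unfolding young_def by auto
qed

lemma L8: assumes "is_partition P" "w \<in> BS c P"
  shows "1 \<le> Nf (BS c P) w \<and> beta c P (Nf (BS c P) w) = w"
proof -
  obtain i where i: "1 \<le> i" "w = beta c P i" using assms(2) unfolding BS_def by auto
  have "i \<le> Nf (BS c P) w" using L5[OF assms(1) i(1), of w c] i by simp
  moreover have "\<not> Suc i \<le> Nf (BS c P) w"
    using L5[OF assms(1), of "Suc i" w c] beta_strict[OF assms(1) i(1), of "Suc i" c] i by auto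
  ultimately have "Nf (BS c P) w = i" by simp
  then show ?thesis using i by simp
qed

lemma Nf_anti: assumes "finite {x\<in>X. v \<le> x}" "v \<le> w" shows "Nf X w \<le> Nf X v"
  unfolding Nf_def using assms by (intro card_mono) auto

lemma young_sub: assumes "is_partition P" "is_partition Q"
  "\<And>v. Nf (BS c P) v \<le> Nf (BS c Q) v" shows "young P \<subseteq> young Q"
  using young_char[OF assms(1), of c] young_char[OF assms(2), of c] assms(3)
  by (auto intro: order_trans)

lemma young_eq_part: assumes "is_partition P" "is_partition Q" "young P = young Q"
  shows "P = Q"
proof
  fix i show "P i = Q i"
  proof (cases "i = 0")
    case True then show ?thesis using assms unfolding is_partition_def by simp
  next
    case False
    have "P i \<le> Q i"
    proof (cases "P i = 0")
      case False
      then have "(i, P i) \<in> young P" using \<open>i \<noteq> 0\<close> unfolding young_def by auto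
      then show ?thesis using assms(3) unfolding young_def by auto
    qed simp
    moreover have "Q i \<le> P i"
    proof (cases "Q i = 0")
      case False
      then have "(i, Q i) \<in> young Q" using \<open>i \<noteq> 0\<close> unfolding young_def by auto
      then show ?thesis using assms(3) unfolding young_def by auto
    qed simp
    ultimately show ?thesis by simp
  qed
qed

lemma finite_young: assumes "is_partition P" shows "finite (young P)"
proof -
  obtain R where R: "\<And>i. R < i \<Longrightarrow> P i = 0" using part_supp[OF assms] by blast
  have "young P \<subseteq> {..R} \<times> {..P 1}"
  proof
    fix u assume "u \<in> young P"
    then obtain i j where u: "u = (i,j)" "1 \<le> i" "1 \<le> j" "j \<le> P i" unfolding young_def by auto
    then have "i \<le> R" using R by (metis not_le le_zero_eq not_one_le_zero order_trans)
    moreover have "j \<le> P 1" using u part_mono[OF assms, of 1 i] by auto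
    ultimately show "u \<in> {..R} \<times> {..P 1}" using u by auto
  qed
  then show ?thesis using finite_subset by blast
qed

lemma CHG: assumes "is_partition P"
  obtains V where "\<And>v. v \<le> V \<Longrightarrow> Nf (BS c P) v = nat (c + 1 - v)"
proof -
  obtain R where R: "\<And>i. R < i \<Longrightarrow> P i = 0" using part_supp[OF assms] by blast
  have "Nf (BS c P) v = nat (c + 1 - v)" if "v \<le> c - int R - 1" for v
  proof -
    define K where "K = nat (c + 1 - v)"
    have K: "int K = c + 1 - v" "R < K" "1 \<le> K" using that unfolding K_def by auto
    have "beta c P K = v" using R[OF K(2)] K(1) unfolding beta_def by simp
    then have "K \<le> Nf (BS c P) v" using L5[OF assms K(3), of v c] by simp
    moreover have "\<not> Suc K \<le> Nf (BS c P) v"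
      using L5[OF assms, of "Suc K" v c] R[of "Suc K"] K unfolding beta_def by auto
    ultimately show ?thesis unfolding K_def by simp
  qed
  then show ?thesis using that by blast
qed

lemma Nf_union: assumes "finite {x\<in>Y \<union> F. v \<le> x}" "Y \<inter> F = {}"
  shows "Nf (Y \<union> F) v = Nf Y v + Nf F v"
proof -
  have "{x\<in>Y \<union> F. v \<le> x} = {x\<in>Y. v \<le> x} \<union> {x\<in>F. v \<le> x}" by auto
  moreover have "finite {x\<in>Y. v \<le> x}" "finite {x\<in>F. v \<le> x}"
    using assms(1) by (auto intro: finite_subset[OF _ assms(1)])
  ultimately show ?thesis unfolding Nf_def using assms(2) by (simp add: card_Un_disjoint disjoint_iff)
qed

lemma Nf_image: assumes "inj_on g Z" shows "Nf (g ` Z) v = card {k\<in>Z. v \<le> g k}"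
proof -
  have "{x\<in>g ` Z. v \<le> x} = g ` {k\<in>Z. v \<le> g k}" by auto
  moreover have "inj_on g {k\<in>Z. v \<le> g k}" using assms by (rule inj_on_subset) auto
  ultimately show ?thesis unfolding Nf_def by (simp add: card_image)
qed

lemma HL:
  assumes P: "is_partition P" and Q: "is_partition Q" and lohi: "lo < hi"
    and inn: "\<And>v. lo < v \<Longrightarrow> v \<le> hi \<Longrightarrow> Nf (BS c P) v = Nf (BS c Q) v + 1"
    and out: "\<And>v. \<not> (lo < v \<and> v \<le> hi) \<Longrightarrow> Nf (BS c P) v \<le> Nf (BS c Q) v"
  shows "card (young P - young Q) = nat (hi - lo)"
    "fst (rhead (young P - young Q)) = Nf (BS c P) (lo + 1)"
    "cont0 (rhead (young P - young Q)) = lo - c"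
    "fst (rtail (young P - young Q)) = Nf (BS c P) hi"
    "cont0 (rtail (young P - young Q)) = hi - c - 1"
proof -
  define X where "X = BS c P"
  define Y where "Y = BS c Q"
  define g where "g v = (Nf X v, nat (v - c - 1 + int (Nf X v)))" for v
  have D: "young P - young Q = g ` {lo<..hi}"
  proof
    show "young P - young Q \<subseteq> g ` {lo<..hi}"
    proof
      fix u assume u: "u \<in> young P - young Q"
      obtain i j where ij: "u = (i,j)" by (cases u)
      define v where "v = int j - int i + c + 1"
      have "1 \<le> i" "1 \<le> j" "i \<le> Nf X v" "\<not> i \<le> Nf Y v"
        using u young_char[OF P, of c] young_char[OF Q, of c] unfolding ij v_def X_def Y_def by auto
      then have "Nf Y v < Nf X v" by simp
      then have v: "lo < v \<and> v \<le> hi" using out[of v] unfolding X_def Y_def by (meson not_le)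
      then have "Nf X v = Nf Y v + 1" using inn unfolding X_def Y_def by auto
      then have "i = Nf X v" using \<open>i \<le> Nf X v\<close> \<open>\<not> i \<le> Nf Y v\<close> by simp
      then have "u = g v" unfolding g_def ij v_def by auto
      then show "u \<in> g ` {lo<..hi}" using v by auto
    qed
  next
    show "g ` {lo<..hi} \<subseteq> young P - young Q"
    proof
      fix u assume "u \<in> g ` {lo<..hi}"
      then obtain v where v: "lo < v" "v \<le> hi" "u = g v" by auto
      define i where "i = Nf X v"
      have NN: "Nf X v = Nf Y v + 1" using inn v unfolding X_def Y_def by auto
      then have i1: "1 \<le> i" unfolding i_def by simp
      have "\<not> i \<le> Nf Y v" using NN unfolding i_def by simp
      then have "\<not> v \<le> beta c Q i" using L5[OF Q i1, of v c] unfolding Y_def by simp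
      then have "v - c - 1 + int i \<ge> 1" unfolding beta_def by simp
      then have j: "int (nat (v - c - 1 + int i)) = v - c - 1 + int i" "1 \<le> nat (v - c - 1 + int i)" by auto
      have u: "u = (i, nat (v - c - 1 + int i))" using v(3) unfolding g_def i_def by simp
      have vv: "int (nat (v - c - 1 + int i)) - int i + c + 1 = v" using j by simp
      show "u \<in> young P - young Q"
        unfolding u young_char[OF P, of c] young_char[OF Q, of c] using vv j i1 NN
        unfolding X_def Y_def i_def by auto
    qed
  qed
  have cg: "cont0 (g v) = v - c - 1" if "lo < v" "v \<le> hi" for v
  proof -
    define i where "i = Nf X v"
    have NN: "Nf X v = Nf Y v + 1" using inn that unfolding X_def Y_def by auto
    then have i1: "1 \<le> i" unfolding i_def by simp
    have "\<not> i \<le> Nf Y v" using NN unfolding i_def by simp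
    then have "\<not> v \<le> beta c Q i" using L5[OF Q i1, of v c] unfolding Y_def by simp
    then have "v - c - 1 + int i \<ge> 1" unfolding beta_def by simp
    then show ?thesis unfolding g_def cont0_def i_def[symmetric] by simp
  qed
  have ginj: "inj_on g {lo<..hi}"
  proof (rule inj_onI)
    fix v w assume "v \<in> {lo<..hi}" "w \<in> {lo<..hi}" "g v = g w"
    then have "cont0 (g v) = cont0 (g w)" by simp
    moreover have "cont0 (g v) = v - c - 1" "cont0 (g w) = w - c - 1"
      using cg \<open>v \<in> {lo<..hi}\<close> \<open>w \<in> {lo<..hi}\<close> by auto
    ultimately show "v = w" by simp
  qed
  show "card (young P - young Q) = nat (hi - lo)" unfolding D using ginj by (simp add: card_image)
  have hd: "rhead (young P - young Q) = g (lo + 1)"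
    unfolding rhead_def D
  proof (rule some_equality)
    show "g (lo + 1) \<in> g ` {lo<..hi} \<and> (\<forall>v\<in>g ` {lo<..hi}. cont0 (g (lo + 1)) \<le> cont0 v)"
      using lohi cg by auto
  next
    fix u assume a: "u \<in> g ` {lo<..hi} \<and> (\<forall>v\<in>g ` {lo<..hi}. cont0 u \<le> cont0 v)"
    then obtain v where v: "lo < v" "v \<le> hi" "u = g v" by auto
    have "cont0 u \<le> cont0 (g (lo+1))" using a lohi by auto
    then have "v = lo + 1" using cg[of v] cg[of "lo+1"] v lohi by auto
    then show "u = g (lo + 1)" using v by simp
  qed
  have tl: "rtail (young P - young Q) = g hi"
    unfolding rtail_def D
  proof (rule some_equality)
    show "g hi \<in> g ` {lo<..hi} \<and> (\<forall>v\<in>g ` {lo<..hi}. cont0 v \<le> cont0 (g hi))"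
      using lohi cg by auto
  next
    fix u assume a: "u \<in> g ` {lo<..hi} \<and> (\<forall>v\<in>g ` {lo<..hi}. cont0 v \<le> cont0 u)"
    then obtain v where v: "lo < v" "v \<le> hi" "u = g v" by auto
    have "cont0 (g hi) \<le> cont0 u" using a lohi by auto
    then have "v = hi" using cg[of v] cg[of "hi"] v lohi by auto
    then show "u = g hi" using v by simp
  qed
  show "fst (rhead (young P - young Q)) = Nf (BS c P) (lo + 1)" unfolding hd g_def X_def by simp
  show "cont0 (rhead (young P - young Q)) = lo - c" unfolding hd using cg[of "lo+1"] lohi by simp
  show "fst (rtail (young P - young Q)) = Nf (BS c P) hi" unfolding tl g_def X_def by simp
  show "cont0 (rtail (young P - young Q)) = hi - c - 1" unfolding tl using cg[of hi] lohi by simp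
qed

lemma cc_range: assumes "n \<ge> 1" "l \<ge> 1" shows "1 \<le> cc n l k \<and> cc n l k \<le> int n"
proof -
  have "int n > 0" using assms by simp
  then show ?thesis unfolding cc_def using pos_mod_bound[of "int n"] pos_mod_sign[of "int n"]
    by (smt (verit))
qed

lemma dd_range: assumes "n \<ge> 1" "l \<ge> 1" shows "1 \<le> dd n l k \<and> dd n l k \<le> l"
proof -
  have N: "int (n*l) > 0" using assms by simp
  define t where "t = (k - 1) mod int (n * l)"
  have t: "0 \<le> t" "t < int n * int l" using N unfolding t_def by auto
  have "t div int n < int l"
  proof (rule ccontr)
    assume "\<not> t div int n < int l"
    then have "int n * int l \<le> int n * (t div int n)" by (simp add: mult_left_mono)
    moreover have "int n * (t div int n) \<le> t"
    proof -
      have "int n * (t div int n) + t mod int n = t" by simp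
      moreover have "t mod int n \<ge> 0" using assms by simp
      ultimately show ?thesis by linarith
    qed
    ultimately show False using t by simp
  qed
  moreover have "0 \<le> t div int n" using t(1) assms pos_imp_zdiv_nonneg_iff[of "int n" t] by simp
  ultimately show ?thesis unfolding dd_def t_def[symmetric] by auto
qed

lemma DEC: assumes "n \<ge> 1" "l \<ge> 1"
  shows "k = cc n l k + int n * (int (dd n l k) - 1) + int (n*l) * mm n l k"
proof -
  define t where "t = (k - 1) mod int (n * l)"
  have t0: "0 \<le> t" using assms unfolding t_def by simp
  have t1: "0 \<le> t div int n" using t0 assms pos_imp_zdiv_nonneg_iff[of "int n" t] by simp
  have "int (dd n l k) - 1 = t div int n" unfolding dd_def t_def[symmetric] using t1 by simp
  then have "int n * (int (dd n l k) - 1) = int n * (t div int n)" by simp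
  moreover have "cc n l k = t mod int n + 1" unfolding cc_def t_def by simp
  moreover have "k - 1 = t + int (n*l) * mm n l k" unfolding t_def mm_def by simp
  moreover have "t = t mod int n + int n * (t div int n)" by simp
  ultimately show ?thesis by linarith
qed

lemma phi_eq: "phi n l k = cc n l k + int n * mm n l k" unfolding phi_def by simp

lemma INJ: assumes "n \<ge> 1" "l \<ge> 1" "phi n l k = phi n l k'" "dd n l k = dd n l k'"
  shows "k = k'"
proof -
  have "cc n l k + int n * mm n l k = cc n l k' + int n * mm n l k'" using assms(3) unfolding phi_def .
  moreover have r: "1 \<le> cc n l k \<and> cc n l k \<le> int n" "1 \<le> cc n l k' \<and> cc n l k' \<le> int n"
    using cc_range[OF assms(1,2)] by auto
  ultimately have "cc n l k = cc n l k' \<and> mm n l k = mm n l k'"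
  proof -
    assume e: "cc n l k + int n * mm n l k = cc n l k' + int n * mm n l k'"
    have "mm n l k = mm n l k'"
    proof (rule ccontr)
      assume "mm n l k \<noteq> mm n l k'"
      then consider "mm n l k \<ge> mm n l k' + 1" | "mm n l k' \<ge> mm n l k + 1" by linarith
      then show False
      proof cases
        case 1
        then have "int n * mm n l k \<ge> int n * (mm n l k' + 1)" by (simp add: mult_left_mono)
        then have "int n * mm n l k \<ge> int n * mm n l k' + int n" by (simp add: algebra_simps)
        then show False using e r by linarith
      next
        case 2
        then have "int n * mm n l k' \<ge> int n * (mm n l k + 1)" by (simp add: mult_left_mono)
        then have "int n * mm n l k' \<ge> int n * mm n l k + int n" by (simp add: algebra_simps)
        then show False using e r by linarith
      qed
    qed
    then show ?thesis using e by simp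
  qed
  then show ?thesis using DEC[OF assms(1,2), of k] DEC[OF assms(1,2), of k'] assms(4) by simp
qed

lemma MONO: assumes "n \<ge> 1" "l \<ge> 1" "dd n l k = dd n l k'" "k < k'"
  shows "phi n l k < phi n l k'"
proof -
  have r: "1 \<le> cc n l k \<and> cc n l k \<le> int n" "1 \<le> cc n l k' \<and> cc n l k' \<le> int n"
    using cc_range[OF assms(1,2)] by auto
  have N: "int (n*l) \<ge> int n" using assms by simp
  have ek: "k = cc n l k + int n * (int (dd n l k) - 1) + int (n*l) * mm n l k"
    and ek': "k' = cc n l k' + int n * (int (dd n l k) - 1) + int (n*l) * mm n l k'"
    using DEC[OF assms(1,2), of k] DEC[OF assms(1,2), of k'] assms(3) by auto
  have "mm n l k \<le> mm n l k'"
  proof (rule ccontr)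
    assume "\<not> mm n l k \<le> mm n l k'"
    then have "mm n l k \<ge> mm n l k' + 1" by simp
    then have "int (n*l) * mm n l k \<ge> int (n*l) * (mm n l k' + 1)" by (simp add: mult_left_mono)
    then have "int (n*l) * mm n l k \<ge> int (n*l) * mm n l k' + int (n*l)" by (simp add: algebra_simps)
    then show False using ek ek' assms(4) r N by linarith
  qed
  then consider "mm n l k = mm n l k'" | "mm n l k' \<ge> mm n l k + 1" by linarith
  then show ?thesis
  proof cases
    case 1 then show ?thesis using ek ek' assms(4) unfolding phi_def by simp
  next
    case 2
    then have "int n * mm n l k' \<ge> int n * (mm n l k + 1)" by (simp add: mult_left_mono)
    then have "int n * mm n l k' \<ge> int n * mm n l k + int n" by (simp add: algebra_simps)
    then show ?thesis using r unfolding phi_def by linarith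
  qed
qed

lemma NTX: assumes "n \<ge> 1" "l \<ge> 1" "1 \<le> u" "u \<le> int n" "1 \<le> w" "w \<le> int n"
  "1 \<le> e" "e \<le> l" "1 \<le> e'" "e' \<le> l"
  shows "int (n*l) dvd ((u - w) + int n * (int e - int e')) \<longleftrightarrow> u = w \<and> e = e'"
proof
  assume a: "int (n*l) dvd ((u - w) + int n * (int e - int e'))"
  then have "int n dvd ((u - w) + int n * (int e - int e'))"
    by (metis dvd_mult_left of_nat_mult)
  then have "int n dvd (u - w)" by (simp add: dvd_add_left_iff)
  then obtain z where z: "u - w = int n * z" by (auto elim: dvdE)
  have "z = 0"
  proof (rule ccontr)
    assume "z \<noteq> 0"
    then consider "z \<ge> 1" | "z \<le> -1" by linarith
    then show False
    proof cases
      case 1 then have "int n * z \<ge> int n * 1" using mult_left_mono[of 1 z "int n"] by simp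
      then show False using z assms by linarith
    next
      case 2 then have "int n * z \<le> int n * (-1)" using mult_left_mono[of z "-1" "int n"] by simp
      then show False using z assms by linarith
    qed
  qed
  then have uw: "u = w" using z by simp
  then have "int n * int l dvd int n * (int e - int e')" using a by simp
  then have "int l dvd (int e - int e')" using assms(1) by (simp add: dvd_mult_cancel_left)
  then obtain y where y: "int e - int e' = int l * y" by (auto elim: dvdE)
  have "y = 0"
  proof (rule ccontr)
    assume "y \<noteq> 0"
    then consider "y \<ge> 1" | "y \<le> -1" by linarith
    then show False
    proof cases
      case 1 then have "int l * y \<ge> int l * 1" using mult_left_mono[of 1 y "int l"] by simp
      then show False using y assms by linarith
    next
      case 2 then have "int l * y \<le> int l * (-1)" using mult_left_mono[of y "-1" "int l"] by simp
      then show False using y assms by linarith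
    qed
  qed
  then show "u = w \<and> e = e'" using uw y by simp
qed simp

lemma phi_mod: assumes "n \<ge> 1" "l \<ge> 1"
  shows "phi n l k mod int n = phi n l k' mod int n \<longleftrightarrow> cc n l k = cc n l k'"
proof -
  have r: "1 \<le> cc n l k \<and> cc n l k \<le> int n" "1 \<le> cc n l k' \<and> cc n l k' \<le> int n"
    using cc_range[OF assms(1,2)] by auto
  have "phi n l k mod int n = phi n l k' mod int n \<longleftrightarrow> int n dvd (phi n l k - phi n l k')"
    by (simp add: mod_eq_dvd_iff)
  also have "\<dots> \<longleftrightarrow> int n dvd (cc n l k - cc n l k')"
  proof -
    have "phi n l k - phi n l k' = (cc n l k - cc n l k') + int n * (mm n l k - mm n l k')"
      unfolding phi_def by (simp add: algebra_simps)
    then show ?thesis by (simp add: dvd_add_left_iff)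
  qed
  also have "\<dots> \<longleftrightarrow> cc n l k = cc n l k'"
    using NTX[of n 1 "cc n l k" "cc n l k'" 1 1] r assms by simp
  finally show ?thesis .
qed

lemma card2_filter: assumes "a \<noteq> b"
  shows "card {k\<in>{a,b}. Pr k} = (if Pr a then 1 else 0) + (if Pr b then 1 else 0)"
proof -
  have "{k\<in>{a,b}. Pr k} = (if Pr a \<and> Pr b then {a,b} else if Pr a then {a} else if Pr b then {b} else {})"
    by auto
  then show ?thesis using assms by simp
qed

lemma Nf2: assumes "a \<noteq> b"
  shows "Nf {a,b} v = (if v \<le> a then 1 else 0) + (if v \<le> b then 1 else 0)"
  unfolding Nf_def using card2_filter[OF assms, of "\<lambda>x. v \<le> x"] by simp

lemma Nf_split2: assumes "is_partition P" "BS c P = C \<union> {a,b}" "a \<notin> C" "b \<notin> C" "a \<noteq> b"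
  shows "Nf (BS c P) v = Nf C v + (if v \<le> a then 1 else 0) + (if v \<le> b then 1 else 0)"
proof -
  have "Nf (C \<union> {a,b}) v = Nf C v + Nf {a,b} v"
    using fin_BS[OF assms(1), of c v] assms by (intro Nf_union) auto
  then show ?thesis using assms(2) Nf2[OF assms(5)] by simp
qed

lemma COMPNF:
  assumes nl: "n \<ge> 1" "l \<ge> 1" and P: "is_partition P"
    and S: "BS c P = phi n l ` {k \<in> C \<union> {a,b}. dd n l k = e}"
    and "a \<notin> C" "b \<notin> C" "a \<noteq> b"
  shows "Nf (BS c P) v = Nf (phi n l ` {k\<in>C. dd n l k = e}) v
     + (if dd n l a = e \<and> v \<le> phi n l a then 1 else 0) + (if dd n l b = e \<and> v \<le> phi n l b then 1 else 0)"
proof -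
  have injE: "inj_on (phi n l) {k. dd n l k = e}"
    by (rule inj_onI) (use INJ[OF nl] in auto)
  have U: "phi n l ` {k \<in> C \<union> {a,b}. dd n l k = e} =
      phi n l ` {k\<in>C. dd n l k = e} \<union> phi n l ` {k\<in>{a,b}. dd n l k = e}" by auto
  have Dj: "phi n l ` {k\<in>C. dd n l k = e} \<inter> phi n l ` {k\<in>{a,b}. dd n l k = e} = {}"
  proof -
    { fix x assume "x \<in> phi n l ` {k\<in>C. dd n l k = e}" "x \<in> phi n l ` {k\<in>{a,b}. dd n l k = e}"
      then obtain k1 k2 where "k1 \<in> C" "dd n l k1 = e" "x = phi n l k1" "k2 \<in> {a,b}" "dd n l k2 = e" "x = phi n l k2"
        by auto
      then have "k1 = k2" using INJ[OF nl, of k1 k2] by auto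
      then have False using \<open>k1 \<in> C\<close> \<open>k2 \<in> {a,b}\<close> assms(5,6) by auto }
    then show ?thesis by blast
  qed
  have "Nf (BS c P) v = Nf (phi n l ` {k\<in>C. dd n l k = e}) v + Nf (phi n l ` {k\<in>{a,b}. dd n l k = e}) v"
    unfolding S U using fin_BS[OF P, of c v] S U Dj by (intro Nf_union) auto
  moreover have "Nf (phi n l ` {k\<in>{a,b}. dd n l k = e}) v = card {k\<in>{k\<in>{a,b}. dd n l k = e}. v \<le> phi n l k}"
    by (rule Nf_image) (rule inj_on_subset[OF injE], auto)
  moreover have "{k\<in>{k\<in>{a,b}. dd n l k = e}. v \<le> phi n l k} = {k\<in>{a,b}. dd n l k = e \<and> v \<le> phi n l k}" by auto
  ultimately show ?thesis using card2_filter[OF assms(7), of "\<lambda>k. dd n l k = e \<and> v \<le> phi n l k"] by simp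
qed

lemma COMPSET: assumes "corresp n l s L p" "e \<in> {1..l}"
  shows "BS (s e) (L e) = phi n l ` {k \<in> BS (charge l s) p. dd n l k = e}"
proof
  show "BS (s e) (L e) \<subseteq> phi n l ` {k \<in> BS (charge l s) p. dd n l k = e}"
  proof
    fix x assume "x \<in> BS (s e) (L e)"
    then obtain i where i: "1 \<le> i" "x = beta (s e) (L e) i" unfolding BS_def by auto
    then have "(x, e) \<in> {(beta (s b) (L b) i, b) | b i. b \<in> {1..l} \<and> 1 \<le> i}" using assms(2) by auto
    then have "(x, e) \<in> (\<lambda>k. (phi n l k, dd n l k)) ` {beta (charge l s) p i | i. 1 \<le> i}"
      using assms(1) unfolding corresp_def by (simp only:)
    then show "x \<in> phi n l ` {k \<in> BS (charge l s) p. dd n l k = e}" unfolding BS_def by force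
  qed
next
  show "phi n l ` {k \<in> BS (charge l s) p. dd n l k = e} \<subseteq> BS (s e) (L e)"
  proof
    fix x assume "x \<in> phi n l ` {k \<in> BS (charge l s) p. dd n l k = e}"
    then obtain k where k: "k \<in> BS (charge l s) p" "dd n l k = e" "x = phi n l k" by auto
    then have "(x, e) \<in> (\<lambda>k. (phi n l k, dd n l k)) ` {beta (charge l s) p i | i. 1 \<le> i}"
      unfolding BS_def by auto
    then have "(x, e) \<in> {(beta (s b) (L b) i, b) | b i. b \<in> {1..l} \<and> 1 \<le> i}"
      using assms(1) unfolding corresp_def by (simp only:)
    then show "x \<in> BS (s e) (L e)" unfolding BS_def by auto
  qed
qed

lemma CORR_UNIQ: assumes nl: "n \<ge> 1" "l \<ge> 1" and P: "is_partition p" "is_partition p'"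
  and "corresp n l s L p" "corresp n l s L p'" shows "p = p'"
proof -
  have inj: "inj (\<lambda>k. (phi n l k, dd n l k))" by (rule injI) (use INJ[OF nl] in auto)
  have "(\<lambda>k. (phi n l k, dd n l k)) ` BS (charge l s) p = (\<lambda>k. (phi n l k, dd n l k)) ` BS (charge l s) p'"
    using assms(5,6) unfolding corresp_def BS_def by simp
  then have "BS (charge l s) p = BS (charge l s) p'" using inj by (simp add: inj_image_eq_iff)
  then have "young p = young p'" using young_char[OF P(1), of "charge l s"] young_char[OF P(2), of "charge l s"] by simp
  then show ?thesis using young_eq_part P by blast
qed

lemma ZR: assumes P: "is_partition P" "psize P = r" "r < i" shows "P i = 0"
proof (rule ccontr)
  assume "P i \<noteq> 0"
  have "(\<lambda>k. (k, 1::nat)) ` {1..i} \<subseteq> young P"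
  proof
    fix u assume "u \<in> (\<lambda>k. (k, 1::nat)) ` {1..i}"
    then obtain k where "k \<in> {1..i}" "u = (k,1)" by auto
    then show "u \<in> young P" using part_mono[OF P(1), of k i] \<open>P i \<noteq> 0\<close> unfolding young_def by auto
  qed
  from card_mono[OF finite_young[OF P(1)] this] have "card ((\<lambda>k. (k, 1::nat)) ` {1..i}) \<le> r"
    using P(2) unfolding psize_def by simp
  moreover have "card ((\<lambda>k. (k, 1::nat)) ` {1..i}) = i" by (simp add: card_image inj_on_def)
  ultimately show False using P(3) by simp
qed

lemma BSdiff: assumes P: "is_partition p" "is_partition q" "psize p = r" "psize q = r"
  shows "BS c p - BS c q = Bset c r p - Bset c r q"
proof
  show "BS c p - BS c q \<subseteq> Bset c r p - Bset c r q"
  proof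
    fix x assume x: "x \<in> BS c p - BS c q"
    then obtain i where i: "1 \<le> i" "x = beta c p i" unfolding BS_def by auto
    have "i \<le> r"
    proof (rule ccontr)
      assume "\<not> i \<le> r"
      then have "beta c p i = beta c q i" using ZR[OF P(1,3)] ZR[OF P(2,4)] unfolding beta_def by simp
      then show False using x i unfolding BS_def by auto
    qed
    moreover have "Bset c r q \<subseteq> BS c q" unfolding Bset_def BS_def by auto
    ultimately show "x \<in> Bset c r p - Bset c r q" using x i unfolding Bset_def by auto
  qed
next
  show "Bset c r p - Bset c r q \<subseteq> BS c p - BS c q"
  proof
    fix x assume x: "x \<in> Bset c r p - Bset c r q"
    then obtain i where i: "1 \<le> i" "i \<le> r" "x = beta c p i" unfolding Bset_def by auto
    have "x \<notin> BS c q"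
    proof
      assume "x \<in> BS c q"
      then obtain j where j: "1 \<le> j" "x = beta c q j" unfolding BS_def by auto
      show False
      proof (cases "j \<le> r")
        case True then show ?thesis using x j unfolding Bset_def by auto
      next
        case False
        then have "beta c q j = beta c p j" using ZR[OF P(1,3)] ZR[OF P(2,4)] unfolding beta_def by simp
        then have "beta c p j = beta c p i" using i j by simp
        moreover have "i < j" using False i by simp
        ultimately show False using beta_strict[OF P(1) i(1), of j c] by simp
      qed
    qed
    then show "x \<in> BS c p - BS c q" using i unfolding BS_def by auto
  qed
qed

lemma card_Bset: assumes "is_partition p" shows "card (Bset c r p) = r"
proof -
  have "Bset c r p = beta c p ` {1..r}" unfolding Bset_def by auto
  moreover have "inj_on (beta c p) {1..r}" using beta_inj[OF assms, of c] by (rule inj_on_subset) auto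
  ultimately show ?thesis by (simp add: card_image)
qed

lemma KD: assumes "n \<ge> 1" "l \<ge> 1"
  shows "int (n*l) dvd (k1 - k2 - X) \<longleftrightarrow>
    int (n*l) dvd (cc n l k1 - cc n l k2 + int n * (int (dd n l k1) - int (dd n l k2)) - X)"
proof -
  have e1: "k1 = cc n l k1 + int n * (int (dd n l k1) - 1) + int (n*l) * mm n l k1" by (rule DEC[OF assms])
  have e2: "k2 = cc n l k2 + int n * (int (dd n l k2) - 1) + int (n*l) * mm n l k2" by (rule DEC[OF assms])
  have eq: "k1 - k2 - X = (cc n l k1 - cc n l k2 + int n * (int (dd n l k1) - int (dd n l k2)) - X)
     + (mm n l k1 - mm n l k2) * int (n*l)"
    by (subst e1, subst e2) (simp add: algebra_simps)
  show ?thesis unfolding eq by (rule dvd_add_times_triv_right_iff)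
qed

lemma SB:
  assumes P: "is_partition P" and Q: "is_partition Q"
    and NP: "\<And>v. Nf (BS c P) v = Z v + (if v \<le> \<alpha> then 1 else 0)"
    and NQ: "\<And>v. Nf (BS c Q) v = Z v + (if v \<le> \<beta> then 1 else 0)"
    and ne: "young P - young Q \<noteq> {}"
  shows "\<beta> < \<alpha> \<and> cont0 (rhead (young P - young Q)) = \<beta> - c"
proof -
  have lt: "\<beta> < \<alpha>"
  proof (rule ccontr)
    assume "\<not> \<beta> < \<alpha>"
    then have "\<And>v. Nf (BS c P) v \<le> Nf (BS c Q) v" using NP NQ by simp
    then have "young P \<subseteq> young Q" by (rule young_sub[OF P Q])
    then show False using ne by simp
  qed
  have "cont0 (rhead (young P - young Q)) = \<beta> - c"
    by (rule HL(3)[OF P Q lt]) (use NP NQ in auto)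
  then show ?thesis using lt by simp
qed

lemma ribbon_ne: "ribbon S \<Longrightarrow> S \<noteq> {}" unfolding ribbon_def by simp

lemma J1_facts: assumes "J1 l L M d d'"
  shows "d \<in> {1..l}" "d' \<in> {1..l}" "d \<noteq> d'" "L d \<noteq> M d" "L d' \<noteq> M d'"
    "young (M d) \<subseteq> young (L d)" "young (L d') \<subseteq> young (M d')"
    "\<And>b. b \<in> {1..l} \<Longrightarrow> b \<noteq> d \<Longrightarrow> b \<noteq> d' \<Longrightarrow> L b = M b"
    "young (L d) - young (M d) \<noteq> {}" "young (M d') - young (L d') \<noteq> {}"
  using assms unfolding J1_def by (auto dest: ribbon_ne)

lemma J2_facts: assumes "J2 l L M d"
  shows "d \<in> {1..l}" "L d \<noteq> M d"
    "\<And>b. b \<in> {1..l} \<Longrightarrow> b \<noteq> d \<Longrightarrow> L b = M b"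
    "young (L d) - young (M d) \<noteq> {}" "young (M d) - young (L d) \<noteq> {}"
  using assms unfolding J2_def by (auto dest: ribbon_ne)

lemma J1_unique: assumes "J1 l L M d d'" "J1 l L M e e'" shows "e = d \<and> e' = d'"
proof -
  note A = J1_facts[OF assms(1)] and B = J1_facts[OF assms(2)]
  have "e \<in> {d, d'}" using A(8)[of e] B(1,4) by auto
  moreover have "e' \<in> {d, d'}" using A(8)[of e'] B(2,5) by auto
  moreover have "e \<noteq> d'"
  proof
    assume "e = d'"
    then have "young (M d') = young (L d')" using A(7) B(6) by auto
    then show False using A(10) by simp
  qed
  ultimately show ?thesis using B(3) by auto
qed

lemma J1_J2: assumes "J1 l L M d d'" shows "\<not> J2 l L M e"
proof
  assume "J2 l L M e"
  note A = J1_facts[OF assms(1)] and B = J2_facts[OF this]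
  show False using B(3)[of d] B(3)[of d'] A(1-5) by auto
qed

lemma J2_unique: assumes "J2 l L M d" "J2 l L M e" shows "e = d"
  using J2_facts[OF assms(1)] J2_facts[OF assms(2)] by auto

lemma jcoef_J1: assumes "J1 l L M d d'" shows "jcoef n l s L M = j1val n s L M d d'"
proof -
  have sm: "(SOME dp. J1 l L M (fst dp) (snd dp)) = (d, d')"
  proof (rule some_equality)
    show "J1 l L M (fst (d,d')) (snd (d,d'))" using assms by simp
  next
    fix dp assume "J1 l L M (fst dp) (snd dp)"
    then have "fst dp = d \<and> snd dp = d'" using J1_unique[OF assms] by blast
    then show "dp = (d,d')" by (simp add: prod_eq_iff)
  qed
  have ex: "\<exists>d d'. J1 l L M d d'" using assms by blast
  have "jcoef n l s L M = (let dp = (SOME dp. J1 l L M (fst dp) (snd dp)) in j1val n s L M (fst dp) (snd dp))"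
    unfolding jcoef_def using ex by (rule if_P)
  also have "\<dots> = j1val n s L M d d'" unfolding Let_def sm by simp
  finally show ?thesis .
qed

lemma jcoef_J2: assumes "J2 l L M d" shows "jcoef n l s L M = j2val n s L M d"
proof -
  have nex: "\<not> (\<exists>d d'. J1 l L M d d')" using J1_J2 assms by blast
  have ex: "\<exists>d. J2 l L M d" using assms by blast
  have sm: "(SOME d. J2 l L M d) = d"
  proof (rule some_equality)
    show "J2 l L M d" by (rule assms)
  next
    fix e assume "J2 l L M e" then show "e = d" using J2_unique[OF assms] by blast
  qed
  have "jcoef n l s L M = (if \<exists>d. J2 l L M d then j2val n s L M (SOME d. J2 l L M d) else 0)"
    unfolding jcoef_def using nex by (rule if_not_P)
  also have "\<dots> = j2val n s L M d" using ex sm by simp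
  finally show ?thesis .
qed

lemma resn_cont: "resn n s b u = (s b + cont0 u) mod int n"
  unfolding resn_def cont0_def by (simp add: algebra_simps)

theorem mainTheorem9:
  fixes n l m r :: nat and s :: "nat \<Rightarrow> int"
    and L M :: "nat \<Rightarrow> nat \<Rightarrow> nat" and p q :: "nat \<Rightarrow> nat"
  assumes "n \<ge> 1" and "l \<ge> 1" and "m \<ge> 1"
    and "multipartition l m L" and "multipartition l m M"
    and H: "condH n l s L M p q r"
  defines "h \<equiv> card (young p - young q)"
    and "x \<equiv> fst (rhead (young p - young q))"
    and "y \<equiv> fst (rtail (young q - young p))"
  defines "\<gamma> \<equiv> (cc n l (beta (charge l s) q y) - cc n l (beta (charge l s) q x)) mod int (n * l)"
    and "\<delta> \<equiv> (int n * (int (dd n l (beta (charge l s) q y)) - int (dd n l (beta (charge l s) q x))))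
              mod int (n * l)"
  shows
    "(\<forall>d d'. J1 l L M d d' \<longrightarrow>
        \<delta> > 0 \<and>
        jprec n l s L M =
          (if int h mod int (n * l) = \<gamma> \<or> int h mod int (n * l) = \<delta>
           then (-1) ^ (rht (young (L d) - young (M d)) + rht (young (M d') - young (L d')))
           else 0))
     \<and>
     (\<forall>d. J2 l L M d \<longrightarrow>
        \<delta> = 0 \<and>
        jprec n l s L M =
          (-1) ^ (rht (young (L d) - young (M d)) + rht (young (M d) - young (L d))) *
          (if int h mod int (n * l) = \<gamma> \<and> int h mod int (n * l) \<noteq> 0 then 1
           else if int h mod int (n * l) \<noteq> \<gamma> \<and> int h mod int (n * l) = 0 then -1
           else 0))"
proof -
  note nl = assms(1,2)
  define c where "c = charge l s"
  define N where "N = int (n * l)"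
  have P: "is_partition p" and Q: "is_partition q" and cL: "corresp n l s L p" and cM: "corresp n l s M q"
    and pr: "prec n l s L M" and sp: "psize p = r" and sq: "psize q = r"
    and cardI: "int (card (Bset c r p \<inter> Bset c r q)) = int r - 2"
    using H unfolding condH_def c_def by auto
  have Lp: "\<And>b. b\<in>{1..l} \<Longrightarrow> is_partition (L b)" and Mp: "\<And>b. b\<in>{1..l} \<Longrightarrow> is_partition (M b)"
    using assms(4,5) unfolding multipartition_def by auto
  obtain p' q' where p': "is_partition p'" "is_partition q'" "corresp n l s L p'" "corresp n l s M q'"
    "dominates_strict p' q'" using pr unfolding prec_def by auto
  have "p' = p" using CORR_UNIQ[OF nl P p'(1) cL p'(3)] by simp
  moreover have "q' = q" using CORR_UNIQ[OF nl Q p'(2) cM p'(4)] by simp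
  ultimately have dom: "\<And>k. (\<Sum>i=1..k. p i) \<le> (\<Sum>i=1..k. q i)" "p \<noteq> q"
    using p'(5) unfolding dominates_strict_def by auto
  define Bp where "Bp = BS c p"
  define Bq where "Bq = BS c q"
  have fI: "finite (Bset c r p \<inter> Bset c r q)" unfolding Bset_def by auto
  have "card (Bp - Bq) = 2"
  proof -
    have "card (Bp - Bq) = card (Bset c r p - Bset c r q)" unfolding Bp_def Bq_def using BSdiff[OF P Q sp sq] by simp
    also have "\<dots> = card (Bset c r p) - card (Bset c r p \<inter> Bset c r q)" using fI by (rule card_Diff_subset_Int)
    finally show ?thesis using card_Bset[OF P] cardI by simp
  qed
  then obtain a1 a2 where A: "Bp - Bq = {a1, a2}" "a1 < a2"
    unfolding card_2_iff by (metis insert_commute linorder_neqE)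
  have "card (Bq - Bp) = 2"
  proof -
    have "card (Bq - Bp) = card (Bset c r q - Bset c r p)" unfolding Bp_def Bq_def using BSdiff[OF Q P sq sp] by simp
    also have "\<dots> = card (Bset c r q) - card (Bset c r q \<inter> Bset c r p)" using fI by (intro card_Diff_subset_Int) (simp add: Int_commute)
    finally show ?thesis using card_Bset[OF Q] cardI by (simp add: Int_commute)
  qed
  then obtain b1 b2 where B: "Bq - Bp = {b1, b2}" "b1 < b2"
    unfolding card_2_iff by (metis insert_commute linorder_neqE)
  define C where "C = Bp \<inter> Bq"
  have BpC: "Bp = C \<union> {a1,a2}" using A unfolding C_def by auto
  have BqC: "Bq = C \<union> {b1,b2}" using B unfolding C_def by auto
  have nC: "a1 \<notin> C" "a2 \<notin> C" "b1 \<notin> C" "b2 \<notin> C" "a1 \<notin> Bq" "a2 \<notin> Bq" "b1 \<notin> Bp" "b2 \<notin> Bp"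
    "b1 \<in> Bq" "b2 \<in> Bq" "a1 \<in> Bp" "a2 \<in> Bp"
    using A B unfolding C_def by auto
  have NP: "\<And>v. Nf Bp v = Nf C v + (if v \<le> a1 then 1 else 0) + (if v \<le> a2 then 1 else 0)"
    unfolding Bp_def by (rule Nf_split2[OF P]) (use BpC nC A in \<open>auto simp: Bp_def\<close>)
  have NQ: "\<And>v. Nf Bq v = Nf C v + (if v \<le> b1 then 1 else 0) + (if v \<le> b2 then 1 else 0)"
    unfolding Bq_def by (rule Nf_split2[OF Q]) (use BqC nC B in \<open>auto simp: Bq_def\<close>)
  have finP: "\<And>v. finite {x\<in>Bp. v \<le> x}" unfolding Bp_def by (rule fin_BS[OF P])
  have finQ: "\<And>v. finite {x\<in>Bq. v \<le> x}" unfolding Bq_def by (rule fin_BS[OF Q])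
  have dist: "a1 \<noteq> b1" "a1 \<noteq> b2" "a2 \<noteq> b1" "a2 \<noteq> b2" using nC by auto
  have o1: "a2 < b2"
  proof (rule ccontr)
    assume "\<not> a2 < b2"
    then have lt: "b2 < a2" using dist by simp
    define k where "k = Nf Bp a2"
    have k: "1 \<le> k" "beta c p k = a2" using L8[OF P, of a2 c] nC unfolding k_def Bp_def by auto
    have "Nf Bq a2 = k - 1" using NP[of a2] NQ[of a2] lt B(2) A(2) unfolding k_def by simp
    then have "\<not> k \<le> Nf Bq a2" using k by simp
    then have "\<not> a2 \<le> beta c q k" using L5[OF Q k(1), of a2 c] unfolding Bq_def by simp
    then have qk: "q k < p k" using k(2) unfolding beta_def by simp
    have qi: "q i \<le> p i" if "i \<in> {1..k}" for i
    proof (cases "q i = 0")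
      case False
      define v where "v = int (q i) - int i + c + 1"
      have "(i, q i) \<in> young q" using False that unfolding young_def by auto
      then have iq: "i \<le> Nf Bq v" using young_char[OF Q, of c] that unfolding v_def Bq_def by auto
      have "i \<le> Nf Bp v"
      proof (cases "v \<le> a2")
        case True
        then have "Nf Bp a2 \<le> Nf Bp v" by (rule Nf_anti[OF finP])
        then show ?thesis using that unfolding k_def by simp
      next
        case False
        then have "Nf Bp v = Nf Bq v" using NP[of v] NQ[of v] lt A(2) B(2) by simp
        then show ?thesis using iq by simp
      qed
      then have "(i, q i) \<in> young p" using young_char[OF P, of c] that False unfolding v_def Bp_def by auto
      then show ?thesis unfolding young_def by auto
    qed simp
    have "(\<Sum>i=1..k. q i) < (\<Sum>i=1..k. p i)"
      by (rule sum_strict_mono_ex1) (use qi qk k in auto)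
    then show False using dom(1)[of k] by simp
  qed
  have o2: "b1 < a1"
  proof (rule ccontr)
    assume "\<not> b1 < a1"
    then have lt: "a1 < b1" using dist by simp
    have "\<And>v. Nf (BS c p) v \<le> Nf (BS c q) v"
      using NP NQ lt o1 unfolding Bp_def Bq_def by simp
    then have "young p \<subseteq> young q" by (rule young_sub[OF P Q])
    moreover have "card (young p) = card (young q)" using sp sq unfolding psize_def by simp
    ultimately have "young p = young q" using finite_young[OF Q] by (simp add: card_subset_eq)
    then show False using young_eq_part[OF P Q] dom(2) by simp
  qed
  have HLpq: "card (young p - young q) = nat (a1 - b1)"
    "fst (rhead (young p - young q)) = Nf Bp (b1 + 1)"
    using HL(1,2)[OF P Q o2, of c] NP NQ o1 o2 A(2) B(2) unfolding Bp_def Bq_def by auto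
  have HLqp: "card (young q - young p) = nat (b2 - a2)"
    "fst (rtail (young q - young p)) = Nf Bq b2"
    using HL(1,4)[OF Q P o1, of c] NP NQ o1 o2 A(2) B(2) unfolding Bp_def Bq_def by auto
  have "card (young p - young q) = card (young q - young p)"
  proof -
    have "card (young p - young q) = card (young p) - card (young p \<inter> young q)"
      using finite_young[OF P] by (intro card_Diff_subset_Int) auto
    moreover have "card (young q - young p) = card (young q) - card (young q \<inter> young p)"
      using finite_young[OF Q] by (intro card_Diff_subset_Int) auto
    ultimately show ?thesis using sp sq unfolding psize_def by (simp add: Int_commute)
  qed
  then have hv: "int h = a1 - b1" "int h = b2 - a2" using HLpq HLqp o1 o2 unfolding h_def by auto
  have "x = Nf Bq b1"
  proof -
    have "Nf Bp (b1 + 1) = Nf Bq (b1 + 1) + 1" using NP NQ o1 o2 A(2) B(2) by simp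
    moreover have "{z\<in>Bq. b1 \<le> z} = insert b1 {z\<in>Bq. b1 + 1 \<le> z}" using nC by auto
    then have "Nf Bq b1 = Nf Bq (b1 + 1) + 1" unfolding Nf_def using finQ[of "b1+1"] by simp
    ultimately show ?thesis using HLpq(2) unfolding x_def by simp
  qed
  then have xv: "beta c q x = b1" using L8[OF Q, of b1 c] nC unfolding Bq_def by auto
  have yv: "beta c q y = b2" using L8[OF Q, of b2 c] nC HLqp(2) unfolding Bq_def y_def by auto
  have \<gamma>v: "\<gamma> = (cc n l b2 - cc n l b1) mod int (n*l)" unfolding \<gamma>_def xv[unfolded c_def] yv[unfolded c_def] by simp
  have \<delta>v: "\<delta> = (int n * (int (dd n l b2) - int (dd n l b1))) mod int (n*l)"
    unfolding \<delta>_def xv[unfolded c_def] yv[unfolded c_def] by simp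
  have ddr: "\<And>k. dd n l k \<in> {1..l}" using dd_range[OF nl] by auto
  have ccr: "\<And>k. 1 \<le> cc n l k \<and> cc n l k \<le> int n" using cc_range[OF nl] by auto
  have compL: "BS (s e) (L e) = phi n l ` {k \<in> C \<union> {a1,a2}. dd n l k = e}" if e: "e \<in> {1..l}" for e
    using COMPSET[OF cL e] BpC unfolding Bp_def c_def by simp
  have compM: "BS (s e) (M e) = phi n l ` {k \<in> C \<union> {b1,b2}. dd n l k = e}" if e: "e \<in> {1..l}" for e
    using COMPSET[OF cM e] BqC unfolding Bq_def c_def by simp
  define Z where "Z e v = Nf (phi n l ` {k\<in>C. dd n l k = e}) v" for e v
  have FL: "Nf (BS (s e) (L e)) v = Z e v + (if dd n l a1 = e \<and> v \<le> phi n l a1 then 1 else 0)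
      + (if dd n l a2 = e \<and> v \<le> phi n l a2 then 1 else 0)" if e: "e \<in> {1..l}" for e v
    unfolding Z_def by (rule COMPNF[OF nl Lp[OF e] compL[OF e]]) (use nC A(2) in auto)
  have FM: "Nf (BS (s e) (M e)) v = Z e v + (if dd n l b1 = e \<and> v \<le> phi n l b1 then 1 else 0)
      + (if dd n l b2 = e \<and> v \<le> phi n l b2 then 1 else 0)" if e: "e \<in> {1..l}" for e v
    unfolding Z_def by (rule COMPNF[OF nl Mp[OF e] compM[OF e]]) (use nC B(2) in auto)
  have cnt: "(if dd n l a1 = e then 1 else 0) + (if dd n l a2 = e then 1 else 0)
      = (if dd n l b1 = e then 1 else (0::nat)) + (if dd n l b2 = e then 1 else 0)" if e: "e \<in> {1..l}" for e
  proof -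
    obtain V1 where V1: "\<And>v. v \<le> V1 \<Longrightarrow> Nf (BS (s e) (L e)) v = nat (s e + 1 - v)"
      using CHG[OF Lp[OF e], where c = "s e"] by blast
    obtain V2 where V2: "\<And>v. v \<le> V2 \<Longrightarrow> Nf (BS (s e) (M e)) v = nat (s e + 1 - v)"
      using CHG[OF Mp[OF e], where c = "s e"] by blast
    define v where "v = min (min V1 V2) (min (min (phi n l a1) (phi n l a2)) (min (phi n l b1) (phi n l b2)))"
    have "Nf (BS (s e) (L e)) v = Nf (BS (s e) (M e)) v" using V1[of v] V2[of v] unfolding v_def by simp
    moreover have "v \<le> phi n l a1" "v \<le> phi n l a2" "v \<le> phi n l b1" "v \<le> phi n l b2" unfolding v_def by auto
    ultimately show ?thesis using FL[OF e, of v] FM[OF e, of v] by simp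
  qed
  have nochg: "young (L e) = young (M e)" if e: "e \<in> {1..l}"
    and "dd n l a1 \<noteq> e" "dd n l a2 \<noteq> e" "dd n l b1 \<noteq> e" "dd n l b2 \<noteq> e" for e
  proof -
    have "\<And>v. Nf (BS (s e) (L e)) v = Nf (BS (s e) (M e)) v" using FL[OF e] FM[OF e] that by simp
    then show ?thesis using young_char[OF Lp[OF e], of "s e"] young_char[OF Mp[OF e], of "s e"] by simp
  qed
  have chg: "dd n l k \<noteq> e" if e: "e \<in> {1..l}" "L e = M e" "k \<in> {a1,a2,b1,b2}" for e k
  proof
    assume dk: "dd n l k = e"
    have eqS: "BS (s e) (L e) = BS (s e) (M e)" using e(2) by simp
    consider "k \<in> {a1,a2}" | "k \<in> {b1,b2}" using e(3) by auto
    then show False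
    proof cases
      case 1
      then have "phi n l k \<in> BS (s e) (L e)" using compL[OF e(1)] dk by auto
      then have "phi n l k \<in> phi n l ` {k \<in> C \<union> {b1,b2}. dd n l k = e}" using eqS compM[OF e(1)] by simp
      then obtain k' where k': "k' \<in> C \<union> {b1,b2}" "dd n l k' = e" "phi n l k = phi n l k'" by auto
      then have "k' = k" using INJ[OF nl, of k k'] dk by simp
      then show False using 1 k' nC dist by auto
    next
      case 2
      then have "phi n l k \<in> BS (s e) (M e)" using compM[OF e(1)] dk by auto
      then have "phi n l k \<in> phi n l ` {k \<in> C \<union> {a1,a2}. dd n l k = e}" using eqS compL[OF e(1)] by simp
      then obtain k' where k': "k' \<in> C \<union> {a1,a2}" "dd n l k' = e" "phi n l k = phi n l k'" by auto
      then have "k' = k" using INJ[OF nl, of k k'] dk by simp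
      then show False using 2 k' nC dist by auto
    qed
  qed
  have eqG1: "int h mod int (n*l) = \<gamma> \<longleftrightarrow> cc n l b1 = cc n l a2 \<and> dd n l b2 = dd n l a2"
  proof -
    have "int h mod int (n*l) = \<gamma> \<longleftrightarrow> int (n*l) dvd (b2 - a2 - (cc n l b2 - cc n l b1))"
      unfolding \<gamma>v hv(2) by (simp add: mod_eq_dvd_iff)
    also have "\<dots> \<longleftrightarrow> int (n*l) dvd (cc n l b2 - cc n l a2 + int n * (int (dd n l b2) - int (dd n l a2)) - (cc n l b2 - cc n l b1))"
      by (rule KD[OF nl])
    also have "\<dots> \<longleftrightarrow> int (n*l) dvd ((cc n l b1 - cc n l a2) + int n * (int (dd n l b2) - int (dd n l a2)))"
    proof -
      have "cc n l b2 - cc n l a2 + int n * (int (dd n l b2) - int (dd n l a2)) - (cc n l b2 - cc n l b1)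
        = (cc n l b1 - cc n l a2) + int n * (int (dd n l b2) - int (dd n l a2))" by simp
      then show ?thesis by (simp only:)
    qed
    also have "\<dots> \<longleftrightarrow> cc n l b1 = cc n l a2 \<and> dd n l b2 = dd n l a2"
      by (rule NTX[OF nl]) (use ccr ddr in auto)
    finally show ?thesis .
  qed
  have eqG2: "int h mod int (n*l) = \<gamma> \<longleftrightarrow> cc n l a1 = cc n l b2 \<and> dd n l a1 = dd n l b1"
  proof -
    have "int h mod int (n*l) = \<gamma> \<longleftrightarrow> int (n*l) dvd (a1 - b1 - (cc n l b2 - cc n l b1))"
      unfolding \<gamma>v hv(1) by (simp add: mod_eq_dvd_iff)
    also have "\<dots> \<longleftrightarrow> int (n*l) dvd (cc n l a1 - cc n l b1 + int n * (int (dd n l a1) - int (dd n l b1)) - (cc n l b2 - cc n l b1))"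
      by (rule KD[OF nl])
    also have "\<dots> \<longleftrightarrow> int (n*l) dvd ((cc n l a1 - cc n l b2) + int n * (int (dd n l a1) - int (dd n l b1)))"
    proof -
      have "cc n l a1 - cc n l b1 + int n * (int (dd n l a1) - int (dd n l b1)) - (cc n l b2 - cc n l b1)
        = (cc n l a1 - cc n l b2) + int n * (int (dd n l a1) - int (dd n l b1))" by simp
      then show ?thesis by (simp only:)
    qed
    also have "\<dots> \<longleftrightarrow> cc n l a1 = cc n l b2 \<and> dd n l a1 = dd n l b1"
      by (rule NTX[OF nl]) (use ccr ddr in auto)
    finally show ?thesis .
  qed
  have eqD1: "int h mod int (n*l) = \<delta> \<longleftrightarrow> cc n l a1 = cc n l b1 \<and> dd n l a1 = dd n l b2"
  proof -
    have "int h mod int (n*l) = \<delta> \<longleftrightarrow> int (n*l) dvd (a1 - b1 - int n * (int (dd n l b2) - int (dd n l b1)))"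
      unfolding \<delta>v hv(1) by (rule mod_eq_dvd_iff)
    also have "\<dots> \<longleftrightarrow> int (n*l) dvd (cc n l a1 - cc n l b1 + int n * (int (dd n l a1) - int (dd n l b1)) - int n * (int (dd n l b2) - int (dd n l b1)))"
      by (rule KD[OF nl])
    also have "\<dots> \<longleftrightarrow> int (n*l) dvd ((cc n l a1 - cc n l b1) + int n * (int (dd n l a1) - int (dd n l b2)))"
    proof -
      have "cc n l a1 - cc n l b1 + int n * (int (dd n l a1) - int (dd n l b1)) - int n * (int (dd n l b2) - int (dd n l b1))
        = (cc n l a1 - cc n l b1) + int n * (int (dd n l a1) - int (dd n l b2))" by (simp add: algebra_simps)
      then show ?thesis by (simp only:)
    qed
    also have "\<dots> \<longleftrightarrow> cc n l a1 = cc n l b1 \<and> dd n l a1 = dd n l b2"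
      by (rule NTX[OF nl]) (use ccr ddr in auto)
    finally show ?thesis .
  qed
  have eqD2: "int h mod int (n*l) = \<delta> \<longleftrightarrow> cc n l b2 = cc n l a2 \<and> dd n l b1 = dd n l a2"
  proof -
    have "int h mod int (n*l) = \<delta> \<longleftrightarrow> int (n*l) dvd (b2 - a2 - int n * (int (dd n l b2) - int (dd n l b1)))"
      unfolding \<delta>v hv(2) by (rule mod_eq_dvd_iff)
    also have "\<dots> \<longleftrightarrow> int (n*l) dvd (cc n l b2 - cc n l a2 + int n * (int (dd n l b2) - int (dd n l a2)) - int n * (int (dd n l b2) - int (dd n l b1)))"
      by (rule KD[OF nl])
    also have "\<dots> \<longleftrightarrow> int (n*l) dvd ((cc n l b2 - cc n l a2) + int n * (int (dd n l b1) - int (dd n l a2)))"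
    proof -
      have "cc n l b2 - cc n l a2 + int n * (int (dd n l b2) - int (dd n l a2)) - int n * (int (dd n l b2) - int (dd n l b1))
        = (cc n l b2 - cc n l a2) + int n * (int (dd n l b1) - int (dd n l a2))" by (simp add: algebra_simps)
      then show ?thesis by (simp only:)
    qed
    also have "\<dots> \<longleftrightarrow> cc n l b2 = cc n l a2 \<and> dd n l b1 = dd n l a2"
      by (rule NTX[OF nl]) (use ccr ddr in auto)
    finally show ?thesis .
  qed
  have eq0: "int h mod int (n*l) = 0 \<longleftrightarrow> cc n l a1 = cc n l b1 \<and> dd n l a1 = dd n l b1"
  proof -
    have "int h mod int (n*l) = 0 \<longleftrightarrow> int (n*l) dvd (a1 - b1 - 0)"
      unfolding hv(1) by (simp add: dvd_eq_mod_eq_0)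
    also have "\<dots> \<longleftrightarrow> int (n*l) dvd (cc n l a1 - cc n l b1 + int n * (int (dd n l a1) - int (dd n l b1)) - 0)"
      by (rule KD[OF nl])
    also have "\<dots> \<longleftrightarrow> cc n l a1 = cc n l b1 \<and> dd n l a1 = dd n l b1"
      using NTX[OF nl, of "cc n l a1" "cc n l b1" "dd n l a1" "dd n l b1"] ccr ddr by auto
    finally show ?thesis .
  qed
  have \<delta>pos: "\<delta> > 0" if "dd n l b1 \<noteq> dd n l b2"
  proof -
    have "\<delta> \<ge> 0" unfolding \<delta>v using nl by simp
    moreover have "\<delta> \<noteq> 0"
    proof
      assume "\<delta> = 0"
      then have "int (n*l) dvd ((1 - 1) + int n * (int (dd n l b2) - int (dd n l b1)))"
        unfolding \<delta>v by (simp add: dvd_eq_mod_eq_0)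
      then show False using NTX[OF nl, of 1 1 "dd n l b2" "dd n l b1"] ddr that nl by auto
    qed
    ultimately show ?thesis by simp
  qed
  have jp: "jprec n l s L M = jcoef n l s L M" unfolding jprec_def using pr by simp
  have SBL: "cont0 (rhead (young (L e) - young (M e))) = \<beta>' - s e"
    if e: "e \<in> {1..l}" and NL: "\<And>v. Nf (BS (s e) (L e)) v = Z e v + (if v \<le> \<alpha>' then 1 else 0)"
    and NM: "\<And>v. Nf (BS (s e) (M e)) v = Z e v + (if v \<le> \<beta>' then 1 else 0)"
    and ne: "young (L e) - young (M e) \<noteq> {}" for e \<alpha>' \<beta>'
    using SB[OF Lp[OF e] Mp[OF e] NL NM ne] by simp
  have SBM: "cont0 (rhead (young (M e) - young (L e))) = \<beta>' - s e"
    if e: "e \<in> {1..l}" and NL: "\<And>v. Nf (BS (s e) (L e)) v = Z e v + (if v \<le> \<beta>' then 1 else 0)"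
    and NM: "\<And>v. Nf (BS (s e) (M e)) v = Z e v + (if v \<le> \<alpha>' then 1 else 0)"
    and ne: "young (M e) - young (L e) \<noteq> {}" for e \<alpha>' \<beta>'
    using SB[OF Mp[OF e] Lp[OF e] NM NL ne] by simp
  have pm: "phi n l k mod int n = phi n l k' mod int n \<longleftrightarrow> cc n l k = cc n l k'" for k k'
    by (rule phi_mod[OF nl])
  show ?thesis
  proof (rule conjI; intro allI impI)
    fix d d' assume J: "J1 l L M d d'"
    note JF = J1_facts[OF J]
    have ind: "dd n l k \<in> {d,d'}" if "k \<in> {a1,a2,b1,b2}" for k
    proof (rule ccontr)
      assume "dd n l k \<notin> {d,d'}"
      then have eqLM: "L (dd n l k) = M (dd n l k)" using JF(8) ddr by auto
      show False using chg[OF ddr eqLM that] by simp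
    qed
    have i1: "dd n l a1 = d \<or> dd n l a1 = d'" and i2: "dd n l a2 = d \<or> dd n l a2 = d'"
      and i3: "dd n l b1 = d \<or> dd n l b1 = d'" and i4: "dd n l b2 = d \<or> dd n l b2 = d'"
      using ind by auto
    have cd: "(if dd n l a1 = d then 1 else 0) + (if dd n l a2 = d then 1 else 0)
      = (if dd n l b1 = d then 1 else (0::nat)) + (if dd n l b2 = d then 1 else 0)" by (rule cnt[OF JF(1)])
    have cd': "(if dd n l a1 = d' then 1 else 0) + (if dd n l a2 = d' then 1 else 0)
      = (if dd n l b1 = d' then 1 else (0::nat)) + (if dd n l b2 = d' then 1 else 0)" by (rule cnt[OF JF(2)])
    have na1: "\<not> (dd n l a1 = d \<and> dd n l a2 = d \<and> dd n l b1 = d \<and> dd n l b2 = d)"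
      using nochg[OF JF(2)] JF(3,10) by auto
    have na2: "\<not> (dd n l a1 = d' \<and> dd n l a2 = d' \<and> dd n l b1 = d' \<and> dd n l b2 = d')"
      using nochg[OF JF(1)] JF(3,9) by auto
    define sg where "sg = (-1::int) ^ (rht (young (L d) - young (M d)) + rht (young (M d') - young (L d')))"
    have j1: "jprec n l s L M = (if resn n s d (rhead (young (L d) - young (M d)))
        = resn n s d' (rhead (young (M d') - young (L d'))) then sg else 0)"
      unfolding jp jcoef_J1[OF J] j1val_def Let_def sg_def by simp
    consider (I) "dd n l a1 = d" "dd n l b1 = d" "dd n l a2 = d'" "dd n l b2 = d'"
      | (II) "dd n l a1 = d" "dd n l b2 = d" "dd n l a2 = d'" "dd n l b1 = d'"
      | (III) "dd n l a2 = d" "dd n l b1 = d" "dd n l a1 = d'" "dd n l b2 = d'"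
      | (IV) "dd n l a2 = d" "dd n l b2 = d" "dd n l a1 = d'" "dd n l b1 = d'"
      using i1 i2 i3 i4 cd cd' na1 na2 JF(3) by (auto split: if_splits)
    then show "\<delta> > 0 \<and> jprec n l s L M =
          (if int h mod int (n * l) = \<gamma> \<or> int h mod int (n * l) = \<delta>
           then (-1) ^ (rht (young (L d) - young (M d)) + rht (young (M d') - young (L d')))
           else 0)"
    proof cases
      case I
      have r1: "cont0 (rhead (young (L d) - young (M d))) = phi n l b1 - s d"
        by (rule SBL[OF JF(1) _ _ JF(9), of "phi n l a1"]) (use FL[OF JF(1)] FM[OF JF(1)] I JF(3) in auto)
      have r2: "cont0 (rhead (young (M d') - young (L d'))) = phi n l a2 - s d'"
        by (rule SBM[OF JF(2) _ _ JF(10), of _ "phi n l b2"]) (use FL[OF JF(2)] FM[OF JF(2)] I JF(3) in auto)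
      have "resn n s d (rhead (young (L d) - young (M d))) = resn n s d' (rhead (young (M d') - young (L d')))
        \<longleftrightarrow> cc n l b1 = cc n l a2" unfolding resn_cont r1 r2 using pm by simp
      then show ?thesis using j1 eqG1 eqD1 I JF(3) \<delta>pos unfolding sg_def by auto
    next
      case II
      have r1: "cont0 (rhead (young (L d) - young (M d))) = phi n l b2 - s d"
        by (rule SBL[OF JF(1) _ _ JF(9), of "phi n l a1"]) (use FL[OF JF(1)] FM[OF JF(1)] II JF(3) in auto)
      have r2: "cont0 (rhead (young (M d') - young (L d'))) = phi n l a2 - s d'"
        by (rule SBM[OF JF(2) _ _ JF(10), of _ "phi n l b1"]) (use FL[OF JF(2)] FM[OF JF(2)] II JF(3) in auto)
      have "resn n s d (rhead (young (L d) - young (M d))) = resn n s d' (rhead (young (M d') - young (L d')))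
        \<longleftrightarrow> cc n l b2 = cc n l a2" unfolding resn_cont r1 r2 using pm by simp
      then show ?thesis using j1 eqG1 eqD2 II JF(3) \<delta>pos unfolding sg_def by auto
    next
      case III
      have r1: "cont0 (rhead (young (L d) - young (M d))) = phi n l b1 - s d"
        by (rule SBL[OF JF(1) _ _ JF(9), of "phi n l a2"]) (use FL[OF JF(1)] FM[OF JF(1)] III JF(3) in auto)
      have r2: "cont0 (rhead (young (M d') - young (L d'))) = phi n l a1 - s d'"
        by (rule SBM[OF JF(2) _ _ JF(10), of _ "phi n l b2"]) (use FL[OF JF(2)] FM[OF JF(2)] III JF(3) in auto)
      have "resn n s d (rhead (young (L d) - young (M d))) = resn n s d' (rhead (young (M d') - young (L d')))
        \<longleftrightarrow> cc n l b1 = cc n l a1" unfolding resn_cont r1 r2 using pm by simp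
      then show ?thesis using j1 eqG1 eqD1 III JF(3) \<delta>pos unfolding sg_def by auto
    next
      case IV
      have r1: "cont0 (rhead (young (L d) - young (M d))) = phi n l b2 - s d"
        by (rule SBL[OF JF(1) _ _ JF(9), of "phi n l a2"]) (use FL[OF JF(1)] FM[OF JF(1)] IV JF(3) in auto)
      have r2: "cont0 (rhead (young (M d') - young (L d'))) = phi n l a1 - s d'"
        by (rule SBM[OF JF(2) _ _ JF(10), of _ "phi n l b1"]) (use FL[OF JF(2)] FM[OF JF(2)] IV JF(3) in auto)
      have "resn n s d (rhead (young (L d) - young (M d))) = resn n s d' (rhead (young (M d') - young (L d')))
        \<longleftrightarrow> cc n l b2 = cc n l a1" unfolding resn_cont r1 r2 using pm by simp
      then show ?thesis using j1 eqG2 eqD1 IV JF(3) \<delta>pos unfolding sg_def by auto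
    qed
  next
    fix d assume J: "J2 l L M d"
    note JF = J2_facts[OF J]
    have ind: "dd n l k = d" if "k \<in> {a1,a2,b1,b2}" for k
    proof (rule ccontr)
      assume "dd n l k \<noteq> d"
      then have eqLM: "L (dd n l k) = M (dd n l k)" using JF(3) ddr by auto
      show False using chg[OF ddr eqLM that] by simp
    qed
    have da: "dd n l a1 = d" "dd n l a2 = d" "dd n l b1 = d" "dd n l b2 = d" using ind by auto
    have ph: "phi n l b1 < phi n l a1" "phi n l a1 < phi n l a2" "phi n l a2 < phi n l b2"
      using MONO[OF nl, of b1 a1] MONO[OF nl, of a1 a2] MONO[OF nl, of a2 b2] da o1 o2 A(2) by auto
    have FLd: "\<And>v. Nf (BS (s d) (L d)) v = Z d v + (if v \<le> phi n l a1 then 1 else 0) + (if v \<le> phi n l a2 then 1 else 0)"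
      using FL[OF JF(1)] da by simp
    have FMd: "\<And>v. Nf (BS (s d) (M d)) v = Z d v + (if v \<le> phi n l b1 then 1 else 0) + (if v \<le> phi n l b2 then 1 else 0)"
      using FM[OF JF(1)] da by simp
    have H1: "card (young (L d) - young (M d)) = nat (phi n l a1 - phi n l b1)"
      "cont0 (rhead (young (L d) - young (M d))) = phi n l b1 - s d"
      using HL(1,3)[OF Lp[OF JF(1)] Mp[OF JF(1)] ph(1), of "s d"] FLd FMd ph by auto
    have H2: "cont0 (rhead (young (M d) - young (L d))) = phi n l a2 - s d"
      using HL(3)[OF Mp[OF JF(1)] Lp[OF JF(1)] ph(3), of "s d"] FLd FMd ph by auto
    have same: "resn n s d (rhead (young (L d) - young (M d))) = resn n s d (rhead (young (M d) - young (L d)))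
        \<longleftrightarrow> cc n l b1 = cc n l a2" unfolding resn_cont H1(2) H2 using pm by simp
    have ndvd: "n dvd card (young (L d) - young (M d)) \<longleftrightarrow> cc n l a1 = cc n l b1"
    proof -
      have ic: "int (card (young (L d) - young (M d))) = phi n l a1 - phi n l b1" using H1(1) ph by simp
      have "n dvd card (young (L d) - young (M d)) \<longleftrightarrow> int n dvd int (card (young (L d) - young (M d)))"
        by (simp only: int_dvd_int_iff)
      also have "\<dots> \<longleftrightarrow> phi n l a1 mod int n = phi n l b1 mod int n" unfolding ic by (rule mod_eq_dvd_iff[symmetric])
      also have "\<dots> \<longleftrightarrow> cc n l a1 = cc n l b1" by (rule pm)
      finally show ?thesis .
    qed
    have \<delta>0: "\<delta> = 0" unfolding \<delta>v using da by simp
    show "\<delta> = 0 \<and>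
        jprec n l s L M =
          (-1) ^ (rht (young (L d) - young (M d)) + rht (young (M d) - young (L d))) *
          (if int h mod int (n * l) = \<gamma> \<and> int h mod int (n * l) \<noteq> 0 then 1
           else if int h mod int (n * l) \<noteq> \<gamma> \<and> int h mod int (n * l) = 0 then -1
           else 0)"
      unfolding jp jcoef_J2[OF J] j2val_def Let_def using same ndvd eq0 eqG1 da \<delta>0 by auto
  qed
qed

end
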